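(* Let $\mathcal{A}$ be a Banach algebra such that $\mathrm{rad}(\mathcal{A})=\mathrm{rann}(\mathcal{A})$ and $\mathcal{A}/\mathrm{rad}(\mathcal{A})$ is commutative. Then the center $Z(\mathcal{A})$ is a closed ideal of $\mathcal{A}$.
   Context: $\mathrm{rad}(\mathcal{A})$ is the Jacobson radical and $\mathrm{rann}(\mathcal{A})=\{c\in\mathcal{A}: ac=0\ \forall a\in\mathcal{A}\}$. $Z(\mathcal{A})=\{z: za=az\ \forall a\in\mathcal{A}\}$. *)

theory Defs
  imports "HOL-Analysis.Analysis"
begin

definition left_ideal :: "'a::ring set \<Rightarrow> bool" where
  "left_ideal L \<longleftrightarrow> 0 \<in> L \<and> (\<forall>x\<in>L. \<forall>y\<in>L. x + y \<in> L) \<and> (\<forall>x\<in>L. - x \<in> L)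
     \<and> (\<forall>a. \<forall>x\<in>L. a * x \<in> L)"

definition modular_left_ideal :: "'a::ring set \<Rightarrow> bool" where
  "modular_left_ideal L \<longleftrightarrow> left_ideal L \<and> (\<exists>u. \<forall>a. a - a * u \<in> L)"

definition maximal_modular_left_ideal :: "'a::ring set \<Rightarrow> bool" where
  "maximal_modular_left_ideal L \<longleftrightarrow> modular_left_ideal L \<and> L \<noteq> UNIV \<and>
     (\<forall>J. left_ideal J \<and> L \<subseteq> J \<and> J \<noteq> UNIV \<longrightarrow> J = L)"

text \<open>Jacobson radical: intersection of all maximal modular left ideals
  (the whole algebra if there are none).\<close>
definition jacobson_rad :: "'a::ring set" where
  "jacobson_rad = \<Inter> {L. maximal_modular_left_ideal L}"

definition rann :: "'a::ring set" where
  "rann = {c. \<forall>a. a * c = 0}"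

definition center :: "'a::ring set" where
  "center = {z. \<forall>a. z * a = a * z}"

definition alg_ideal :: "'a::real_algebra set \<Rightarrow> bool" where
  "alg_ideal I \<longleftrightarrow> 0 \<in> I \<and> (\<forall>x\<in>I. \<forall>y\<in>I. x + y \<in> I) \<and> (\<forall>r. \<forall>x\<in>I. r *\<^sub>R x \<in> I)
     \<and> (\<forall>a. \<forall>x\<in>I. a * x \<in> I \<and> x * a \<in> I)"

end

theory Submission
  imports Defs
begin

theorem lemma5p2:
  assumes "(jacobson_rad :: 'a::{real_normed_algebra, banach} set) = rann"
    and "\<forall>a b::'a. a * b - b * a \<in> jacobson_rad"
  shows "closed (center :: 'a set) \<and> alg_ideal (center :: 'a set)"
proof
  have eq: "(center :: 'a set) = (\<Inter>a. {z. z * a = a * z})"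
    unfolding center_def by auto
  have "\<And>a::'a. closed {z. z * a = a * z}"
    by (intro closed_Collect_eq continuous_intros)
  then show "closed (center :: 'a set)" unfolding eq by (intro closed_INT) auto
next
  have comm: "c * (a * b - b * a) = 0" for a b c :: 'a
    using assms unfolding rann_def by auto
  have key: "(a * z) * b = b * (a * z)" if z: "z \<in> (center :: 'a set)" for a b z :: 'a
  proof -
    have zc: "\<And>x. z * x = x * z" using z unfolding center_def by auto
    have "(a * z) * b = (a * b) * z" by (metis mult.assoc zc)
    moreover have "b * (a * z) = (b * a) * z" by (simp add: mult.assoc)
    moreover have "(a * b - b * a) * z = 0" using comm[of z a b] zc by metis
    ultimately show ?thesis by (simp add: algebra_simps)
  qed
  show "alg_ideal (center :: 'a set)"
    unfolding alg_ideal_def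
  proof (intro conjI ballI allI)
    show "(0::'a) \<in> center" by (simp add: center_def)
  next
    fix x y :: 'a assume "x \<in> center" "y \<in> center"
    then show "x + y \<in> center" by (simp add: center_def algebra_simps)
  next
    fix r :: real and x :: 'a assume "x \<in> center"
    then show "r *\<^sub>R x \<in> center" by (simp add: center_def)
  next
    fix a x :: 'a assume x: "x \<in> center"
    show "a * x \<in> center" using key[OF x] by (simp add: center_def)
    have "x * a = a * x" using x by (simp add: center_def)
    then show "x * a \<in> center" using key[OF x] by (simp add: center_def)
  qed
qed

end
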